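(* Let $\rho\ge 0$ and let $t=(\sqrt{1+8\rho}-1)/(2\rho)$ if $\rho>0$ and $t=2$ if $\rho=0$. Consider the two-dimensional Poisson regression model with interaction at $\boldsymbol{\beta}=(0,-1,-1,-\rho)^\top$ on $\mathcal{X}=[0,\infty)^2$, and let $\xi_t$ be the design assigning equal weights $1/4$ to $(0,0)$, $(2,0)$, $(0,2)$ and $(t,t)$. Then $d((x,x);\xi_t)\le 0$ for all $x\ge 0$.
   Context: In the model, an observation at setting $\mathbf{x}=(x_1,x_2)$ is Poisson distributed with mean $\lambda(\mathbf{x})=\exp(\mathbf{f}(\mathbf{x})^\top\boldsymbol{\beta})=\exp(-x_1-x_2-\rho x_1x_2)$, where $\mathbf{f}(\mathbf{x})=(1,x_1,x_2,x_1x_2)^\top$. For a design $\xi$ with settings $\mathbf{x}_i$ and weights $w_i$ (nonnegative, summing to $1$), the information matrix is $\mathbf{M}(\xi)=\sum_i w_i\lambda(\mathbf{x}_i)\mathbf{f}(\mathbf{x}_i)\mathbf{f}(\mathbf{x}_i)^\top$, and the deduced sensitivity function is $d(\mathbf{x};\xi)=\mathbf{f}(\mathbf{x})^\top\mathbf{M}(\xi)^{-1}\mathbf{f}(\mathbf{x})/p-1/\lambda(\mathbf{x})$ with $p=4$. *)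

theory Defs
  imports "HOL-Analysis.Analysis"
begin

definition regf :: "real \<times> real \<Rightarrow> real ^ 4" where
  "regf x = vector [1, fst x, snd x, fst x * snd x]"

text \<open>Intensity lambda(x) = exp(-x1 - x2 - rho x1 x2), i.e. beta = (0,-1,-1,-rho).\<close>
definition intensity :: "real \<Rightarrow> real \<times> real \<Rightarrow> real" where
  "intensity \<rho> x = exp (- fst x - snd x - \<rho> * fst x * snd x)"

text \<open>A (finite) design: list of (setting, weight) pairs.
  Information matrix M(xi) = sum_i w_i lambda(x_i) f(x_i) f(x_i)^T.\<close>
definition info_matrix :: "real \<Rightarrow> ((real \<times> real) \<times> real) list \<Rightarrow> real ^ 4 ^ 4" where
  "info_matrix \<rho> \<xi> =
     sum_list (map (\<lambda>(x, w). (w * intensity \<rho> x) *\<^sub>R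
        (\<chi> i j. regf x $ i * regf x $ j)) \<xi>)"

text \<open>Deduced sensitivity function with p = 4.\<close>
definition sensitivity :: "real \<Rightarrow> ((real \<times> real) \<times> real) list \<Rightarrow> real \<times> real \<Rightarrow> real" where
  "sensitivity \<rho> \<xi> x =
     (regf x \<bullet> (matrix_inv (info_matrix \<rho> \<xi>) *v regf x)) / 4 - 1 / intensity \<rho> x"

definition t_rho :: "real \<Rightarrow> real" where
  "t_rho \<rho> = (if \<rho> > 0 then (sqrt (1 + 8 * \<rho>) - 1) / (2 * \<rho>) else 2)"

definition design_t :: "real \<Rightarrow> ((real \<times> real) \<times> real) list" where
  "design_t t = [((0,0), 1/4), ((2,0), 1/4), ((0,2), 1/4), ((t,t), 1/4)]"

end

theory Submission
  imports Defs
begin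


lemma poly1:
  fixes s t :: real
  assumes "0 \<le> s" "s \<le> 1/2" "0 \<le> t" "t \<le> 2"
  shows "0 \<le> 1 + ((2-t)* s^2 + 2*t* s) + ((2-t)* s^2 + 2*t* s)^2/2 + ((2-t)* s^2 + 2*t* s)^3/6
     - ((1-s)*(1+s-t* s))^2 - 2*(37/5)*(t* s*(1-s)/2)^2 - (37/5)*(1 + t*(16/5))* s^4"
proof -
  have e: "1 + ((2-t)* s^2 + 2*t* s) + ((2-t)* s^2 + 2*t* s)^2/2 + ((2-t)* s^2 + 2*t* s)^3/6
     - ((1-s)*(1+s-t* s))^2 - 2*(37/5)*(t* s*(1-s)/2)^2 - (37/5)*(1 + t*(16/5))* s^4
     = s * (1 * (s^0 * ((1 - 2* s)^5 * (t^1 * (2 - t)^2))) + 2 * (s^0 * ((1 - 2* s)^5 * (t^2 * (2 - t)^1))) + 1 * (s^0 * ((1 - 2* s)^5 * (t^3 * (2 - t)^0))) + (1/2) * (s^1 * ((1 - 2* s)^4 * (t^0 * (2 - t)^3))) + (43/4) * (s^1 * ((1 - 2* s)^4 * (t^1 * (2 - t)^2))) + (373/20) * (s^1 * ((1 - 2* s)^4 * (t^2 * (2 - t)^1))) + (42/5) * (s^1 * ((1 - 2* s)^4 * (t^3 * (2 - t)^0))) + 4 * (s^2 * ((1 - 2* s)^3 * (t^0 * (2 - t)^3))) + (93/2) * (s^2 * ((1 - 2* s)^3 * (t^1 * (2 - t)^2))) + (739/10) * (s^2 * ((1 - 2* s)^3 * (t^2 * (2 - t)^1))) + (491/15) * (s^2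 * ((1 - 2* s)^3 * (t^3 * (2 - t)^0))) + (56/5) * (s^3 * ((1 - 2* s)^2 * (t^0 * (2 - t)^3))) + (2317/25) * (s^3 * ((1 - 2* s)^2 * (t^1 * (2 - t)^2))) + (7073/50) * (s^3 * ((1 - 2* s)^2 * (t^2 * (2 - t)^1))) + (3299/50) * (s^3 * ((1 - 2* s)^2 * (t^3 * (2 - t)^0))) + (64/5) * (s^4 * ((1 - 2* s)^1 * (t^0 * (2 - t)^3))) + (1943/25) * (s^4 * ((1 - 2* s)^1 * (t^1 * (2 - t)^2))) + (2896/25) * (s^4 * ((1 - 2* s)^1 * (t^2 * (2 - t)^1))) + (1498/25) * (s^4 * ((1 - 2* s)^1 * (t^3 * (2 - t)^0))) + (149/30) * (s^5 * ((1 - 2* s)^0 * (t^0 * (2 - t)^3))) + (418/25) * (s^5 * ((1 - 2* s)^0 * (t^1 * (2 - t)^2))) + (566/25) * (s^5 * ((1 - 2* s)^0 * (t^2 * (2 - t)^1))) + (1154/75) * (s^5 * ((1 - 2* s)^0 * (t^3 * (2 - t)^0))))"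
    by (simp add: field_simps power2_eq_square power3_eq_cube power_numeral_reduce) (simp add: algebra_simps)?
  have a: "0 \<le> 1 - 2* s" "0 \<le> 2 - t" using assms by auto
  show ?thesis unfolding e using assms a
    by (intro mult_nonneg_nonneg add_nonneg_nonneg zero_le_power) auto
qed

lemma poly2:
  fixes s t :: real
  assumes "1/2 \<le> s" "0 \<le> t" "t \<le> 2"
  shows "0 \<le> (1+t+t^2/2+t^3/6)*((2/3)*(2+s)* s^3 + (2-t)* s^4) - t^2* s^2/2 - (1+s-t* s)^2/7"
proof -
  have e: "(1+t+t^2/2+t^3/6)*((2/3)*(2+s)* s^3 + (2-t)* s^4) - t^2* s^2/2 - (1+s-t* s)^2/7
     = (1/1344) * ((s - 1/2)^0 * (t^0 * (2 - t)^4)) + (57/896) * ((s - 1/2)^0 * (t^1 * (2 - t)^3)) + (463/2688) * ((s - 1/2)^0 * (t^2 * (2 - t)^2)) + (1361/8064) * ((s - 1/2)^0 * (t^3 * (2 - t)^1)) + (395/8064) * ((s - 1/2)^0 * (t^4 * (2 - t)^0)) + (5/42) * ((s - 1/2)^1 * (t^0 * (2 - t)^4)) + (87/112) * ((s - 1/2)^1 * (t^1 * (2 - t)^3)) + (545/336) * ((s - 1/2)^1 * (t^2 * (2 - t)^2)) + (1471/1008) * ((s - 1/2)^1 * (t^3 * (2 - t)^1)) + (415/1008) * ((s - 1/2)^1 * (t^4 * (2 - t)^0)) + (41/112) * ((s - 1/2)^2 * (t^0 * (2 - t)^4)) + (33/16) * ((s - 1/2)^2 * (t^1 * (2 - t)^3))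 + (471/112) * ((s - 1/2)^2 * (t^2 * (2 - t)^2)) + (61/16) * ((s - 1/2)^2 * (t^3 * (2 - t)^1)) + (59/56) * ((s - 1/2)^2 * (t^4 * (2 - t)^0)) + (5/12) * ((s - 1/2)^3 * (t^0 * (2 - t)^4)) + (9/4) * ((s - 1/2)^3 * (t^1 * (2 - t)^3)) + (55/12) * ((s - 1/2)^3 * (t^2 * (2 - t)^2)) + (149/36) * ((s - 1/2)^3 * (t^3 * (2 - t)^1)) + (19/18) * ((s - 1/2)^3 * (t^4 * (2 - t)^0)) + (1/6) * ((s - 1/2)^4 * (t^0 * (2 - t)^4)) + (7/8) * ((s - 1/2)^4 * (t^1 * (2 - t)^3)) + (41/24) * ((s - 1/2)^4 * (t^2 * (2 - t)^2)) + (103/72) * ((s - 1/2)^4 * (t^3 * (2 - t)^1)) + (19/72) * ((s - 1/2)^4 * (t^4 * (2 - t)^0))"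
    by (simp add: field_simps power2_eq_square power3_eq_cube power_numeral_reduce) (simp add: algebra_simps)?
  have a: "0 \<le> s - 1/2" "0 \<le> 2 - t" using assms by auto
  show ?thesis unfolding e using assms a
    by (intro mult_nonneg_nonneg add_nonneg_nonneg zero_le_power) auto
qed


lemma exp_T3: "1 + u + u^2/2 + u^3/6 \<le> exp (u::real)"
proof -
  obtain \<xi> where "exp u = (\<Sum>m<4. u^m / fact m) + (exp \<xi> / fact 4) * u^4"
    using Maclaurin_exp_le[of u 4] by blast
  moreover have "(\<Sum>m<4. u^m / fact m) = 1 + u + u^2/2 + u^3/6"
    by (simp add: eval_nat_numeral fact_numeral)
  moreover have "0 \<le> (exp \<xi> / fact 4) * u^4" by simp
  ultimately show ?thesis by linarith
qed

lemma exp2_lower: "7 \<le> exp (2::real)"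
proof -
  obtain \<xi> where "exp 2 = (\<Sum>m<5. (2::real)^m / fact m) + (exp \<xi> / fact 5) * 2^5"
    using Maclaurin_exp_le[of 2 5] by blast
  moreover have "(\<Sum>m<5. (2::real)^m / fact m) = 7"
    by (simp add: eval_nat_numeral fact_numeral)
  moreover have "0 \<le> (exp \<xi> / fact 5) * (2::real)^5" by simp
  ultimately show ?thesis by linarith
qed

lemma exp2_upper: "exp (2::real) \<le> 37/5"
proof -
  have "exp (2::real) = exp 1 * exp 1" by (simp flip: exp_add)
  also have "\<dots> \<le> (272/100) * (272/100)"
    using e_less_272 by (intro mult_mono) auto
  finally show ?thesis by simp
qed

lemma exp_chord: fixes t :: real assumes "0 \<le> t" "t \<le> 2" shows "exp t \<le> 1 + t * (exp 2 - 1) / 2"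
proof -
  have "exp ((1 - t/2) *\<^sub>R 0 + (t/2) *\<^sub>R 2) \<le> (1 - t/2) * exp 0 + (t/2) * exp (2::real)"
    using assms by (intro convex_onD[OF exp_convex]) auto
  then show ?thesis by (simp add: field_simps)
qed

lemma core:
  fixes s t :: real
  assumes t0: "0 < t" and t2: "t \<le> 2" and s0: "0 \<le> s"
  shows "((1-s)*(1+s-t* s))^2 + exp 2 * (t* s*(1-s))^2/2 + exp (t+2) * (s^2)^2
     \<le> exp ((2-t)* s^2 + 2*t* s)"
proof -
  define a where "a = exp (2::real)"
  have a7: "7 \<le> a" and a37: "a \<le> 37/5" using exp2_lower exp2_upper by (auto simp: a_def)
  have c: "exp (t+2) = a * exp t" by (simp add: a_def exp_add mult.commute)
  show ?thesis
  proof (cases "s \<le> 1/2")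
    case True
    define \<phi> where "\<phi> = (2-t)* s^2 + 2*t* s"
    have "0 \<le> \<phi>" using t0 t2 s0 unfolding \<phi>_def by auto
    have e1: "1 + \<phi> + \<phi>^2/2 + \<phi>^3/6 \<le> exp \<phi>" by (rule exp_T3)
    have et: "exp t \<le> 1 + t * (a - 1) / 2" using exp_chord[of t] t0 t2 by (simp add: a_def)
    have "a * exp t \<le> (37/5) * (1 + t * (16/5))"
    proof -
      have "a * exp t \<le> a * (1 + t * (a - 1) / 2)" using et a7 by (intro mult_left_mono) auto
      also have "\<dots> \<le> (37/5) * (1 + t * (16/5))"
        using a7 a37 t0 by (intro mult_mono) (auto intro!: divide_right_mono mult_left_mono)
      finally show ?thesis .
    qed
    then have c1: "exp (t+2) * (s^2)^2 \<le> (37/5) * (1 + t * (16/5)) * s^4"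
    proof -
      have "exp (t+2) * (s^2)^2 = (a * exp t) * s^4" unfolding c by (simp flip: power_mult)
      also have "\<dots> \<le> (37/5) * (1 + t * (16/5)) * s^4" using \<open>a * exp t \<le> _\<close> by (intro mult_right_mono) auto
      finally show ?thesis .
    qed
    have c2: "a * (t* s*(1-s))^2/2 \<le> 2*(37/5)*(t* s*(1-s)/2)^2"
    proof -
      have "a * (t* s*(1-s))^2/2 \<le> (37/5) * (t* s*(1-s))^2/2"
        using a37 by (intro divide_right_mono mult_right_mono) auto
      also have "\<dots> = 2*(37/5)*(t* s*(1-s)/2)^2" by (simp add: power2_eq_square)
      finally show ?thesis .
    qed
    have p: "0 \<le> 1 + \<phi> + \<phi>^2/2 + \<phi>^3/6
     - ((1-s)*(1+s-t* s))^2 - 2*(37/5)*(t* s*(1-s)/2)^2 - (37/5)*(1 + t*(16/5))* s^4"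
      unfolding \<phi>_def using poly1[of s t] True s0 t0 t2 by simp
    show ?thesis using e1 c1 c2 p unfolding \<phi>_def[symmetric] a_def[symmetric] by linarith
  next
    case False
    define u where "u = s - 1"
    have s_u: "s = 1 + u" using u_def by simp
    define w where "w = exp u"
    have w1: "s + u^2*(2+s)/6 \<le> w"
    proof -
      have "1 + u + u^2/2 + u^3/6 = s + u^2*(2+s)/6"
        unfolding s_u by (simp add: field_simps power2_eq_square power3_eq_cube)
      then show ?thesis using exp_T3[of u] unfolding w_def by linarith
    qed
    have "0 \<le> u^2*(2+s)/6" using s0 by simp
    then have ws: "s \<le> w" using w1 by linarith
    have w4: "s^4 + 4* s^3*(u^2*(2+s)/6) \<le> w^4"
    proof -
      have h1: "0 \<le> w^3 + w^2* s + w* s^2 - 3* s^3"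
      proof -
        have "s^3 \<le> w^3" using ws s0 by (intro power_mono) auto
        moreover have "s^2 * s \<le> w^2 * s" using ws s0 by (intro mult_right_mono power_mono) auto
        moreover have "s * s^2 \<le> w * s^2" using ws s0 by (intro mult_right_mono) auto
        ultimately show ?thesis by (simp add: power3_eq_cube power2_eq_square)
      qed
      have "0 \<le> (w - s) * (w^3 + w^2* s + w* s^2 - 3* s^3)" using h1 ws by simp
      moreover have "(w - s) * (w^3 + w^2* s + w* s^2 - 3* s^3) = w^4 - (s^4 + 4* s^3*(w - s))"
        by (simp add: eval_nat_numeral algebra_simps)
      ultimately have "s^4 + 4* s^3*(w - s) \<le> w^4" by linarith
      moreover have "4* s^3*(u^2*(2+s)/6) \<le> 4* s^3*(w - s)"
        using w1 s0 by (intro mult_left_mono) auto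
      ultimately show ?thesis by linarith
    qed
    have e4: "exp (4*u) = w^4" unfolding w_def using exp_of_nat_mult[of 4 u] by simp
    define L where "L = (2/3)*(2+s)* s^3 + (2-t)* s^4"
    have L0: "0 \<le> L" unfolding L_def using s0 t2 by simp
    have eq: "(2-t)* s^2 + 2*t* s = (t+2) + 4*u + (2-t)*u^2"
      unfolding s_u by (simp add: algebra_simps power2_eq_square)
    have "exp ((2-t)* s^2 + 2*t* s) = exp (t+2) * (exp (4*u) * exp ((2-t)*u^2))"
      unfolding eq by (simp add: exp_add)
    moreover have "s^4 + u^2 * L \<le> exp (4*u) * exp ((2-t)*u^2)"
    proof -
      have "exp (4*u) * (1 + (2-t)*u^2) \<le> exp (4*u) * exp ((2-t)*u^2)"
        by (intro mult_left_mono) auto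
      moreover have "s^4 + u^2 * L \<le> exp (4*u) * (1 + (2-t)*u^2)"
      proof -
        have "(2-t)*u^2* s^4 \<le> (2-t)*u^2*w^4"
          using ws s0 t2 by (intro mult_left_mono power_mono) auto
        moreover have "4* s^3*(u^2*(2+s)/6) = u^2 * ((2/3)*(2+s)* s^3)" by (simp add: algebra_simps)
        moreover have "u^2 * L = u^2 * ((2/3)*(2+s)* s^3) + (2-t)*u^2* s^4" unfolding L_def by (simp add: algebra_simps)
        moreover have "w^4 * (1 + (2-t)*u^2) = w^4 + (2-t)*u^2*w^4" by (simp add: algebra_simps)
        ultimately show ?thesis using w4 unfolding e4 by linarith
      qed
      ultimately show ?thesis by linarith
    qed
    ultimately have E: "exp (t+2) * (s^4 + u^2 * L) \<le> exp ((2-t)* s^2 + 2*t* s)"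
      by (simp add: mult_left_mono)
    have T3t: "1+t+t^2/2+t^3/6 \<le> exp t" using exp_T3[of t] by simp
    have P2: "0 \<le> (1+t+t^2/2+t^3/6)*L - t^2* s^2/2 - (1+s-t* s)^2/7"
      using poly2[of s t] False t0 t2 unfolding L_def by simp
    have K: "(1+s-t* s)^2 + a*(t* s)^2/2 \<le> exp (t+2) * L"
    proof -
      have "(1+s-t* s)^2 \<le> a * ((1+s-t* s)^2/7)" using mult_right_mono[OF a7, of "(1+s-t* s)^2"] by simp
      moreover have "a * (t^2* s^2/2 + (1+s-t* s)^2/7) \<le> a * ((1+t+t^2/2+t^3/6)*L)"
        using P2 a7 by (intro mult_left_mono) auto
      moreover have "a * (t^2* s^2/2 + (1+s-t* s)^2/7) = a*(t* s)^2/2 + a * ((1+s-t* s)^2/7)"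
        by (simp add: algebra_simps power_mult_distrib)
      ultimately have "(1+s-t* s)^2 + a*(t* s)^2/2 \<le> a * ((1+t+t^2/2+t^3/6)*L)"
        by linarith
      also have "\<dots> \<le> a * (exp t * L)"
        using T3t L0 a7 by (intro mult_left_mono mult_right_mono) auto
      finally show ?thesis unfolding c by (simp add: mult.assoc)
    qed
    have "((1-s)*(1+s-t* s))^2 + a * (t* s*(1-s))^2/2 = u^2 * ((1+s-t* s)^2 + a*(t* s)^2/2)"
      unfolding u_def by (simp add: algebra_simps power2_eq_square)
    also have "\<dots> \<le> u^2 * (exp (t+2) * L)" using K by (intro mult_left_mono) auto
    finally have "((1-s)*(1+s-t* s))^2 + a * (t* s*(1-s))^2/2 + exp (t+2) * (s^2)^2
       \<le> exp (t+2) * (s^4 + u^2 * L)"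
      by (simp add: algebra_simps flip: power_mult)
    then show ?thesis using E unfolding a_def by linarith
  qed
qed



lemma vector_4 [simp]:
 "(vector [x,y,z,w] ::('a::zero)^4)$1 = x"
 "(vector [x,y,z,w] ::('a::zero)^4)$2 = y"
 "(vector [x,y,z,w] ::('a::zero)^4)$3 = z"
 "(vector [x,y,z,w] ::('a::zero)^4)$4 = w"
  unfolding vector_def by simp_all

definition outer :: "real^4 \<Rightarrow> real^4 \<Rightarrow> real^4^4" where
  "outer a b = (\<chi> i j. a $ i * b $ j)"

lemma matrix_inv_eq:
  fixes M N :: "real^'n^'n"
  assumes "M ** N = mat 1"
  shows "matrix_inv M = N"
proof -
  have NM: "N ** M = mat 1" using assms matrix_left_right_inverse by blast
  have ex: "\<exists>A'. M ** A' = mat 1 \<and> A' ** M = mat 1" using assms NM by blast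
  define A' where "A' = matrix_inv M"
  have A': "M ** A' = mat 1 \<and> A' ** M = mat 1"
    unfolding A'_def matrix_inv_def using someI_ex[OF ex] by simp
  have "A' = A' ** (M ** N)" using assms by simp
  also have "\<dots> = (A' ** M) ** N" by (simp add: matrix_mul_assoc)
  also have "\<dots> = N" using A' by simp
  finally show ?thesis unfolding A'_def .
qed

lemma inv_main:
  fixes q r t :: real
  assumes q: "q > 0" and r: "r > 0" and t: "t \<noteq> 0"
  defines "f1 \<equiv> vector [1,0,0,0] :: real^4"
  and "f2 \<equiv> vector [1,2,0,0] :: real^4"
  and "f3 \<equiv> vector [1,0,2,0] :: real^4"
  and "f4 \<equiv> vector [1,t,t,t*t] :: real^4"
  and "g1 \<equiv> vector [1,-1/2,-1/2,(t-1)/t^2] :: real^4"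
  and "g2 \<equiv> vector [0,1/2,0,-1/(2*t)] :: real^4"
  and "g3 \<equiv> vector [0,0,1/2,-1/(2*t)] :: real^4"
  and "g4 \<equiv> vector [0,0,0,1/t^2] :: real^4"
  shows "((1/4) *\<^sub>R outer f1 f1 + (q/4) *\<^sub>R outer f2 f2 + (q/4) *\<^sub>R outer f3 f3 + (r/4) *\<^sub>R outer f4 f4)
     ** (4 *\<^sub>R outer g1 g1 + (4/q) *\<^sub>R outer g2 g2 + (4/q) *\<^sub>R outer g3 g3 + (4/r) *\<^sub>R outer g4 g4) = mat 1"
  unfolding vec_eq_iff forall_4 matrix_matrix_mult_def outer_def
  using q r t
  by (simp add: sum_4 mat_def f1_def f2_def f3_def f4_def g1_def g2_def g3_def g4_def field_simps power2_eq_square)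

lemma quad:
  fixes y g1 g2 g3 g4 :: "real^4" and c1 c2 c3 c4 :: real
  shows "y \<bullet> ((c1 *\<^sub>R outer g1 g1 + c2 *\<^sub>R outer g2 g2 + c3 *\<^sub>R outer g3 g3 + c4 *\<^sub>R outer g4 g4) *v y)
    = c1 * (g1 \<bullet> y)^2 + c2 * (g2 \<bullet> y)^2 + c3 * (g3 \<bullet> y)^2 + c4 * (g4 \<bullet> y)^2"
  by (simp add: inner_vec_def sum_4 matrix_vector_mult_def outer_def algebra_simps power2_eq_square)

lemma t_props:
  fixes \<rho> :: real assumes "\<rho> \<ge> 0"
  shows "0 < t_rho \<rho> \<and> t_rho \<rho> \<le> 2 \<and> \<rho> * (t_rho \<rho>)^2 + t_rho \<rho> = 2"
proof (cases "\<rho> > 0")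
  case False
  then have "\<rho> = 0" using assms by simp
  then show ?thesis by (simp add: t_rho_def)
next
  case True
  define w where "w = sqrt (1 + 8*\<rho>)"
  have w2: "w^2 = 1 + 8*\<rho>" unfolding w_def using True by simp
  have w1: "1 < w" unfolding w_def using True by (simp add: real_less_rsqrt)
  have t: "t_rho \<rho> = (w - 1)/(2*\<rho>)" unfolding t_rho_def w_def using True by simp
  have pos: "0 < t_rho \<rho>" unfolding t using w1 True by simp
  have eq: "\<rho> * (t_rho \<rho>)^2 + t_rho \<rho> = 2"
  proof -
    have "\<rho> * ((w - 1)/(2*\<rho>))^2 + (w - 1)/(2*\<rho>) = (w^2 - 1)/(4*\<rho>)"
      using True by (simp add: field_simps power2_eq_square)
    also have "\<dots> = 2" using w2 True by simp
    finally show ?thesis unfolding t .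
  qed
  have "\<rho> * (t_rho \<rho>)^2 \<ge> 0" using True by simp
  then show ?thesis using pos eq by linarith
qed

theorem lemma4:
  fixes \<rho> x :: real
  assumes "\<rho> \<ge> 0" and "x \<ge> 0"
  shows "sensitivity \<rho> (design_t (t_rho \<rho>)) (x, x) \<le> 0"
proof -
  define t where "t = t_rho \<rho>"
  have t0: "0 < t" and t2: "t \<le> 2" and tr: "\<rho> * t^2 + t = 2" using t_props[OF assms(1)] unfolding t_def by auto
  define q where "q = exp (-2::real)"
  define r where "r = exp (- t - t - \<rho> * t * t)"
  have r_eq: "r = exp (- (t+2))" unfolding r_def using tr by (simp add: power2_eq_square algebra_simps)
  have q0: "q > 0" and r0: "r > 0" unfolding q_def r_def by auto
  define f1 :: "real^4" where "f1 = vector [1,0,0,0]"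
  define f2 :: "real^4" where "f2 = vector [1,2,0,0]"
  define f3 :: "real^4" where "f3 = vector [1,0,2,0]"
  define f4 :: "real^4" where "f4 = vector [1,t,t,t*t]"
  define g1 :: "real^4" where "g1 = vector [1,-1/2,-1/2,(t-1)/t^2]"
  define g2 :: "real^4" where "g2 = vector [0,1/2,0,-1/(2*t)]"
  define g3 :: "real^4" where "g3 = vector [0,0,1/2,-1/(2*t)]"
  define g4 :: "real^4" where "g4 = vector [0,0,0,1/t^2]"
  define N where "N = 4 *\<^sub>R outer g1 g1 + (4/q) *\<^sub>R outer g2 g2 + (4/q) *\<^sub>R outer g3 g3 + (4/r) *\<^sub>R outer g4 g4"
  have M: "info_matrix \<rho> (design_t t) =
     (1/4) *\<^sub>R outer f1 f1 + (q/4) *\<^sub>R outer f2 f2 + (q/4) *\<^sub>R outer f3 f3 + (r/4) *\<^sub>R outer f4 f4"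
    unfolding info_matrix_def design_t_def vec_eq_iff forall_4
    by (simp add: outer_def regf_def intensity_def q_def r_def f1_def f2_def f3_def f4_def)
  have inv: "matrix_inv (info_matrix \<rho> (design_t t)) = N"
    unfolding M N_def f1_def f2_def f3_def f4_def g1_def g2_def g3_def g4_def
    by (rule matrix_inv_eq, rule inv_main) (use q0 r0 t0 in auto)
  define y where "y = regf (x,x)"
  define s where "s = x / t"
  have xs: "x = t * s" unfolding s_def using t0 by simp
  have s0: "0 \<le> s" unfolding s_def using t0 assms by simp
  have y: "y = vector [1, t* s, t* s, t* s*(t* s)]" unfolding y_def regf_def xs by simp
  have d1: "g1 \<bullet> y = (1-s)*(1+s-t* s)" unfolding g1_def y
    using t0 by (simp add: inner_vec_def sum_4 field_simps power2_eq_square)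
  have d2: "g2 \<bullet> y = t* s*(1-s)/2" unfolding g2_def y
    using t0 by (simp add: inner_vec_def sum_4 field_simps power2_eq_square)
  have d3: "g3 \<bullet> y = t* s*(1-s)/2" unfolding g3_def y
    using t0 by (simp add: inner_vec_def sum_4 field_simps power2_eq_square)
  have d4: "g4 \<bullet> y = s^2" unfolding g4_def y
    using t0 by (simp add: inner_vec_def sum_4 field_simps power2_eq_square)
  have iq: "4/q = 4 * exp 2" unfolding q_def by (simp add: exp_minus field_simps)
  have ir: "4/r = 4 * exp (t+2)" unfolding r_eq exp_minus[of "t+2"] by (simp add: divide_inverse)
  have il: "1 / intensity \<rho> (x,x) = exp ((2-t)* s^2 + 2*t* s)"
  proof -
    have "x + x + \<rho>*x*x = (2-t)* s^2 + 2*t* s"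
      using tr unfolding xs by (simp add: algebra_simps power2_eq_square) (metis mult.assoc mult.left_commute distrib_left)
    then have "- x - x - \<rho> * x * x = -((2-t)* s^2 + 2*t* s)" by linarith
    then have "intensity \<rho> (x,x) = exp (-((2-t)* s^2 + 2*t* s))" unfolding intensity_def by simp
    then show ?thesis unfolding exp_minus by (simp add: divide_inverse)
  qed
  have "sensitivity \<rho> (design_t t) (x,x) =
     (4 * ((1-s)*(1+s-t* s))^2 + 4 * exp 2 * (t* s*(1-s)/2)^2 + 4 * exp 2 * (t* s*(1-s)/2)^2
       + 4 * exp (t+2) * (s^2)^2) / 4 - exp ((2-t)* s^2 + 2*t* s)"
    unfolding sensitivity_def inv N_def y_def[symmetric] quad d1 d2 d3 d4 iq ir il by simp
  also have "\<dots> = ((1-s)*(1+s-t* s))^2 + exp 2 * (t* s*(1-s))^2/2 + exp (t+2) * (s^2)^2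
     - exp ((2-t)* s^2 + 2*t* s)"
    by (simp add: field_simps power2_eq_square)
  also have "\<dots> \<le> 0" using core[OF t0 t2 s0] by linarith
  finally show ?thesis unfolding t_def .
qed


end
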